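(* Let $Gr_n$ be the grid graph with vertex set $\{0,\dots,2^n\}^2$, edges between vertices at $\ell_1$-distance 1, and the $\ell_1$-metric. For any $A\subseteq V(Gr_n)$ with $A\ne\emptyset$ and $A^c\ne\emptyset$, we have $\min\{\mathrm{diam}(A),\mathrm{diam}(A^c)\}\le2\,\mathrm{diam}(\partial_VA)$.
   Context: $A^c=V(Gr_n)\setminus A$. The symmetric vertex boundary $\partial_VA$ is the set of all endpoints of edges having one endpoint in $A$ and the other in $A^c$. diam is with respect to the $\ell_1$-metric. *)

theory Defs
  imports Main
begin

definition grid_V :: "nat \<Rightarrow> (int \<times> int) set" where
  "grid_V n = {0..2^n} \<times> {0..2^n}"

definition l1_dist :: "int \<times> int \<Rightarrow> int \<times> int \<Rightarrow> int" where
  "l1_dist p q = \<bar>fst p - fst q\<bar> + \<bar>snd p - snd q\<bar>"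

definition grid_edge :: "nat \<Rightarrow> int \<times> int \<Rightarrow> int \<times> int \<Rightarrow> bool" where
  "grid_edge n p q \<longleftrightarrow> p \<in> grid_V n \<and> q \<in> grid_V n \<and> l1_dist p q = 1"

definition vboundary :: "nat \<Rightarrow> (int \<times> int) set \<Rightarrow> (int \<times> int) set" where
  "vboundary n A = {p. \<exists>q. grid_edge n p q \<and>
      ((p \<in> A \<and> q \<in> grid_V n - A) \<or> (p \<in> grid_V n - A \<and> q \<in> A))}"

text \<open>Diameter w.r.t. the l1 metric (for finite sets; 0 for the empty set).\<close>
definition l1_diam :: "(int \<times> int) set \<Rightarrow> int" where
  "l1_diam S = (if S = {} then 0 else Max {l1_dist p q | p q. p \<in> S \<and> q \<in> S})"

end

theory Submission
  imports Defs
begin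

lemma step_exists:
  fixes f :: "int \<Rightarrow> bool"
  shows "a \<le> b \<Longrightarrow> f a \<noteq> f b \<Longrightarrow> \<exists>x. a \<le> x \<and> x < b \<and> f x \<noteq> f (x+1)"
proof (induction "nat (b - a)" arbitrary: a)
  case 0
  then show ?case by auto
next
  case (Suc k)
  show ?case
  proof (cases "f (a+1) = f a")
    case True
    have "\<exists>x. a+1 \<le> x \<and> x < b \<and> f x \<noteq> f (x+1)"
      using Suc.hyps(1)[of "a+1"] Suc.hyps(2) Suc.prems True by auto
    then obtain x where "a+1 \<le> x" "x < b" "f x \<noteq> f (x+1)" by blast
    then show ?thesis by (intro exI[of _ x]) auto
  next
    case False
    then show ?thesis using Suc.hyps(2) by (intro exI[of _ a]) auto
  qed
qed

lemma finite_V: "finite (grid_V n)"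
  unfolding grid_V_def by simp

lemma row_lemma:
  assumes "p \<in> grid_V n" "q \<in> grid_V n" "snd p = snd q" "(p \<in> A) \<noteq> (q \<in> A)"
  shows "\<exists>b\<in>vboundary n A. snd b = snd p"
proof -
  obtain x1 y where p: "p = (x1, y)" by (cases p)
  obtain x2 where q: "q = (x2, y)" using assms(3) p by (cases q) auto
  define f where "f x = ((x, y) \<in> A)" for x
  define lo where "lo = min x1 x2"
  define hi where "hi = max x1 x2"
  have "f lo \<noteq> f hi" using assms(4) p q unfolding f_def lo_def hi_def
    by (auto simp: min_def max_def)
  moreover have "lo \<le> hi" unfolding lo_def hi_def by simp
  ultimately obtain x where x: "lo \<le> x" "x < hi" "f x \<noteq> f (x+1)"
    using step_exists[of lo hi f] by blast
  have V: "(x, y) \<in> grid_V n" "(x+1, y) \<in> grid_V n"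
    using assms(1,2) p q x unfolding grid_V_def lo_def hi_def by auto
  have e: "grid_edge n (x, y) (x+1, y)"
    using V unfolding grid_edge_def l1_dist_def by simp
  have "(x, y) \<in> vboundary n A"
    unfolding vboundary_def using e V x(3) unfolding f_def by blast
  then show ?thesis using p by (intro bexI[of _ "(x, y)"]) auto
qed

lemma col_lemma:
  assumes "p \<in> grid_V n" "q \<in> grid_V n" "fst p = fst q" "(p \<in> A) \<noteq> (q \<in> A)"
  shows "\<exists>b\<in>vboundary n A. fst b = fst p"
proof -
  obtain x y1 where p: "p = (x, y1)" by (cases p)
  obtain y2 where q: "q = (x, y2)" using assms(3) p by (cases q) auto
  define f where "f y = ((x, y) \<in> A)" for y
  define lo where "lo = min y1 y2"
  define hi where "hi = max y1 y2"
  have "f lo \<noteq> f hi" using assms(4) p q unfolding f_def lo_def hi_def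
    by (auto simp: min_def max_def)
  moreover have "lo \<le> hi" unfolding lo_def hi_def by simp
  ultimately obtain y where y: "lo \<le> y" "y < hi" "f y \<noteq> f (y+1)"
    using step_exists[of lo hi f] by blast
  have V: "(x, y) \<in> grid_V n" "(x, y+1) \<in> grid_V n"
    using assms(1,2) p q y unfolding grid_V_def lo_def hi_def by auto
  have e: "grid_edge n (x, y) (x, y+1)"
    using V unfolding grid_edge_def l1_dist_def by simp
  have "(x, y) \<in> vboundary n A"
    unfolding vboundary_def using e V y(3) unfolding f_def by blast
  then show ?thesis using p by (intro bexI[of _ "(x, y)"]) auto
qed

lemma diam_img: "{l1_dist p q | p q. p \<in> S \<and> q \<in> S} = (\<lambda>(p,q). l1_dist p q) ` (S \<times> S)"
  by auto

lemma dist_le_diam: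
  assumes "finite S" "p \<in> S" "q \<in> S"
  shows "l1_dist p q \<le> l1_diam S"
proof -
  have "S \<noteq> {}" using assms by auto
  moreover have "l1_dist p q \<in> (\<lambda>(p,q). l1_dist p q) ` (S \<times> S)" using assms by force
  ultimately show ?thesis unfolding l1_diam_def diam_img using assms(1) by (simp add: Max_ge)
qed

lemma diam_le:
  assumes "finite S" "\<And>p q. p \<in> S \<Longrightarrow> q \<in> S \<Longrightarrow> l1_dist p q \<le> K" "K \<ge> 0"
  shows "l1_diam S \<le> K"
proof (cases "S = {}")
  case True then show ?thesis using assms(3) unfolding l1_diam_def by simp
next
  case False
  have "\<forall>x \<in> (\<lambda>(p,q). l1_dist p q) ` (S \<times> S). x \<le> K" using assms(2) by auto
  then show ?thesis unfolding l1_diam_def diam_img using False assms(1)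
    by (simp add: Max_le_iff)
qed

lemma vb_sub: "vboundary n A \<subseteq> grid_V n"
  unfolding vboundary_def grid_edge_def by auto

theorem lemma3p6:
  fixes n :: nat and A :: "(int \<times> int) set"
  assumes "A \<subseteq> grid_V n" and "A \<noteq> {}" and "grid_V n - A \<noteq> {}"
  shows "min (l1_diam A) (l1_diam (grid_V n - A)) \<le> 2 * l1_diam (vboundary n A)"
proof -
  define N :: int where "N = 2^n"
  define B where "B = vboundary n A"
  define D where "D = l1_diam B"
  have N0: "N \<ge> 1" unfolding N_def by simp
  have finB: "finite B" unfolding B_def using vb_sub finite_V finite_subset by blast
  have finA: "finite A" using assms(1) finite_V finite_subset by blast
  have dB: "l1_dist b1 b2 \<le> D" if "b1 \<in> B" "b2 \<in> B" for b1 b2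
    using dist_le_diam[OF finB that] unfolding D_def .
  show ?thesis
  proof (cases "D \<ge> N")
    case True
    have "l1_diam A \<le> 2 * N"
    proof (rule diam_le[OF finA])
      fix p q assume "p \<in> A" "q \<in> A"
      then have "p \<in> grid_V n" "q \<in> grid_V n" using assms(1) by auto
      then show "l1_dist p q \<le> 2 * N"
        unfolding grid_V_def l1_dist_def N_def by (auto simp: abs_if)
    qed (use N0 in auto)
    moreover have "min (l1_diam A) (l1_diam (grid_V n - A)) \<le> l1_diam A" by simp
    ultimately show ?thesis using True unfolding D_def B_def by linarith
  next
    case False
    have "\<exists>y0\<in>{0, N}. \<forall>b\<in>B. snd b \<noteq> y0"
    proof (rule ccontr)
      assume "\<not> ?thesis"
      then obtain b1 b2 where "b1 \<in> B" "b2 \<in> B" "snd b1 = 0" "snd b2 = N" by auto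
      then have "l1_dist b1 b2 \<ge> N" unfolding l1_dist_def by auto
      with dB[OF \<open>b1 \<in> B\<close> \<open>b2 \<in> B\<close>] False show False by linarith
    qed
    then obtain y0 where y0: "y0 \<in> {0, N}" "\<forall>b\<in>B. snd b \<noteq> y0" by blast
    have "\<exists>x0\<in>{0, N}. \<forall>b\<in>B. fst b \<noteq> x0"
    proof (rule ccontr)
      assume "\<not> ?thesis"
      then obtain b1 b2 where "b1 \<in> B" "b2 \<in> B" "fst b1 = 0" "fst b2 = N" by auto
      then have "l1_dist b1 b2 \<ge> N" unfolding l1_dist_def by auto
      with dB[OF \<open>b1 \<in> B\<close> \<open>b2 \<in> B\<close>] False show False by linarith
    qed
    then obtain x0 where x0: "x0 \<in> {0, N}" "\<forall>b\<in>B. fst b \<noteq> x0" by blast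
    define p0 where "p0 = (x0, y0)"
    have p0V: "p0 \<in> grid_V n" using x0 y0 N0 unfolding p0_def grid_V_def N_def by auto
    define P where "P = {a \<in> grid_V n. (a \<in> A) \<noteq> (p0 \<in> A)}"
    have key: "(\<exists>b\<in>B. snd b = snd a) \<and> (\<exists>b\<in>B. fst b = fst a)" if "a \<in> P" for a
    proof
      have aV: "a \<in> grid_V n" and ac: "(a \<in> A) \<noteq> (p0 \<in> A)" using that P_def by auto
      define q where "q = (x0, snd a)"
      have qV: "q \<in> grid_V n" using aV p0V unfolding q_def p0_def grid_V_def by auto
      show "\<exists>b\<in>B. snd b = snd a"
      proof (cases "(q \<in> A) = (p0 \<in> A)")
        case True
        then show ?thesis using row_lemma[where A=A, OF qV aV] ac unfolding B_def q_def by auto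
      next
        case False
        then obtain b where "b \<in> B" "fst b = x0"
          using col_lemma[where A=A, OF qV p0V] unfolding B_def q_def p0_def by auto
        then show ?thesis using x0 by auto
      qed
      define r where "r = (fst a, y0)"
      have rV: "r \<in> grid_V n" using aV p0V unfolding r_def p0_def grid_V_def by auto
      show "\<exists>b\<in>B. fst b = fst a"
      proof (cases "(r \<in> A) = (p0 \<in> A)")
        case True
        then show ?thesis using col_lemma[where A=A, OF rV aV] ac unfolding B_def r_def by auto
      next
        case False
        then obtain b where "b \<in> B" "snd b = y0"
          using row_lemma[where A=A, OF rV p0V] unfolding B_def r_def p0_def by auto
        then show ?thesis using y0 by auto
      qed
    qed
    have finP: "finite P" unfolding P_def using finite_V by simp
    have D0: "D \<ge> 0"
    proof (cases "B = {}")
      case True then show ?thesis unfolding D_def l1_diam_def by simp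
    next
      case False
      then obtain b where "b \<in> B" by auto
      then have "l1_dist b b \<le> D" using dB by auto
      then show ?thesis unfolding l1_dist_def by simp
    qed
    have dP: "l1_diam P \<le> 2 * D"
    proof (rule diam_le[OF finP])
      fix p q assume "p \<in> P" "q \<in> P"
      then obtain b1 b2 b3 b4 where b: "b1 \<in> B" "b2 \<in> B" "b3 \<in> B" "b4 \<in> B"
        "snd b1 = snd p" "snd b2 = snd q" "fst b3 = fst p" "fst b4 = fst q"
        using key by meson
      have "\<bar>snd p - snd q\<bar> \<le> D" using dB[OF b(1,2)] b(5,6) unfolding l1_dist_def by auto
      moreover have "\<bar>fst p - fst q\<bar> \<le> D" using dB[OF b(3,4)] b(7,8) unfolding l1_dist_def by auto
      ultimately show "l1_dist p q \<le> 2 * D" unfolding l1_dist_def by linarith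
    qed (use D0 in auto)
    show ?thesis
    proof (cases "p0 \<in> A")
      case True
      then have "P = grid_V n - A" unfolding P_def by auto
      then have "l1_diam (grid_V n - A) \<le> 2 * l1_diam (vboundary n A)" using dP unfolding D_def B_def by simp
      then show ?thesis by linarith
    next
      case False
      then have "P = A" unfolding P_def using assms(1) by auto
      then have "l1_diam A \<le> 2 * l1_diam (vboundary n A)" using dP unfolding D_def B_def by simp
      then show ?thesis by linarith
    qed
  qed
qed

end
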